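(* Consider an instance of the MA-HLP and the formulation $FZ\text{-}S$ as described in the context. Let $(\overline{\mathbf y},\overline{\mathbf z},\overline{\boldsymbol\eta})$ be an optimal solution of the LP relaxation of $FZ\text{-}S$, with $\overline{\mathbf y}\in[0,1]^E$, $\overline{\mathbf z}\in[0,1]^V$. For $r\in R$ and $h\in T^r$, let $\overline u_{rh}=\overline y_{e_h}$ if $h\in T^r_y$ and $\overline u_{rh}=\overline z_{i_h}$ if $h\in T^r_z$, and let $\overline t_r=\min\{t\in T^r:\ \sum_{h=1}^{t}\overline u_{rh}\ge 1\}$ (this set being presupposed nonempty). Then the optimal value of the LP relaxation of $FZ\text{-}S$ is \[\overline v_{FZS}=\sum_{i\in V}f_i\overline z_i+\sum_{r\in R}\Big[\overline v_{r\overline t_r}\Big(1-\sum_{h=1}^{\overline t_r-1}\overline u_{rh}\Big)+\sum_{h=1}^{\overline t_r-1}\overline v_{rh}\,\overline u_{rh}\Big].\]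
   Context: Instance: a complete network with node set $V=\{1,\dots,n\}$, unit routing costs $c_{ij}\ge0$ ($i,j\in V$) satisfying the triangle inequality with $c_{ii}=0$; $E=\{ij: i<j\}$ is the set of undirected edges and $\delta(i)$ the set of edges incident with $i$. Each node $i$ has hub setup cost $f_i\ge0$. Commodities $r\in R$ are triplets $(o^r,d^r,w^r)$ with $w^r\ge0$. Parameters $0\le\alpha\le1$, $\gamma,\theta>\alpha$. For $r\in R$, $i,j\in V$: $C_{rij}=w^r(\gamma c_{o^ri}+\alpha c_{ij}+\theta c_{jd^r})$; $F_{re}=\min\{C_{rij},C_{rji}\}$ for $e=ij\in E$; $H_{ri}=C_{rii}$. For $r\in R$ let $E^r=\{e=ij\in E: F_{re}<\min\{H_{ri},H_{rj}\}\}$ and $V^r=\{i\in V:\ \text{there is } e\in\delta(i) \text{ with } H_{ri}<F_{re}\}$. Let $T^r=\{1,\dots,|E^r|+|V^r|\}$ index the values $\{F_{re}\}_{e\in E^r}\cup\{H_{ri}\}_{i\in V^r}$ sorted in nondecreasing order (ties broken arbitrarily) as $\overline v_{r1}\le\overline v_{r2}\le\cdots$; $T^r=T^r_y\cup T^r_z$ where for $t\in T^r_y$ the value $\overline v_{rt}=F_{re_t}$ comes from edge $e_t\in E^r$, and for $t\in T^r_z$ the value $\overline v_{rt}=H_{ri_t}$ comes from node $i_t\in V^r$. Formulation $FZ\text{-}S$: variables $y_e\in\{0,1\}$ ($e\in E$), $z_i\in\{0,1\}$ ($i\in V$), $\eta^r\ge0$ ($r\in R$); minimize $\sum_{i\in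 V}f_iz_i+\sum_{r\in R}\eta^r$ subject to, for all $r\in R$, $t\in T^r$: $\eta^r\ge\overline v_{rt}+\sum_{h\in T^r_y,\,h\le t-1}(F_{re_h}-\overline v_{rt})y_{e_h}+\sum_{h\in T^r_z,\,h\le t-1}(H_{ri_h}-\overline v_{rt})z_{i_h}$; and $y_e\le z_i$, $y_e\le z_j$ for all $e=ij\in E$. The LP relaxation replaces the binary constraints by $y_e,z_i\in[0,1]$. *)

theory Defs
  imports Main "HOL.Real"
begin

text \<open>Undirected edges e = ij with i < j are encoded as pairs (i,j).\<close>

definition nodes :: "nat \<Rightarrow> nat set" where
  "nodes n = {1..n}"

definition edges :: "nat \<Rightarrow> (nat \<times> nat) set" where
  "edges n = {(i,j). 1 \<le> i \<and> i < j \<and> j \<le> n}"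

definition incident :: "nat \<Rightarrow> nat \<Rightarrow> (nat \<times> nat) set" where
  "incident n i = {e \<in> edges n. fst e = i \<or> snd e = i}"

definition Ccost :: "(nat \<Rightarrow> nat \<Rightarrow> real) \<Rightarrow> real \<Rightarrow> real \<Rightarrow> real \<Rightarrow>
    ('r \<Rightarrow> nat) \<Rightarrow> ('r \<Rightarrow> nat) \<Rightarrow> ('r \<Rightarrow> real) \<Rightarrow> 'r \<Rightarrow> nat \<Rightarrow> nat \<Rightarrow> real" where
  "Ccost c \<alpha> \<gamma> \<theta> orig dest w r i j =
     w r * (\<gamma> * c (orig r) i + \<alpha> * c i j + \<theta> * c j (dest r))"

definition Fval :: "('r \<Rightarrow> nat \<Rightarrow> nat \<Rightarrow> real) \<Rightarrow> 'r \<Rightarrow> nat \<times> nat \<Rightarrow> real" where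
  "Fval C r e = min (C r (fst e) (snd e)) (C r (snd e) (fst e))"

definition Hval :: "('r \<Rightarrow> nat \<Rightarrow> nat \<Rightarrow> real) \<Rightarrow> 'r \<Rightarrow> nat \<Rightarrow> real" where
  "Hval C r i = C r i i"

definition Er :: "nat \<Rightarrow> ('r \<Rightarrow> nat \<Rightarrow> nat \<Rightarrow> real) \<Rightarrow> 'r \<Rightarrow> (nat \<times> nat) set" where
  "Er n C r = {e \<in> edges n. Fval C r e < min (Hval C r (fst e)) (Hval C r (snd e))}"

definition Vr :: "nat \<Rightarrow> ('r \<Rightarrow> nat \<Rightarrow> nat \<Rightarrow> real) \<Rightarrow> 'r \<Rightarrow> nat set" where
  "Vr n C r = {i \<in> nodes n. \<exists>e \<in> incident n i. Hval C r i < Fval C r e}"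

text \<open>The items indexed by T^r: edges of E^r (Inl) and nodes of V^r (Inr).\<close>
definition items :: "nat \<Rightarrow> ('r \<Rightarrow> nat \<Rightarrow> nat \<Rightarrow> real) \<Rightarrow> 'r \<Rightarrow> ((nat \<times> nat) + nat) set" where
  "items n C r = Inl ` Er n C r \<union> Inr ` Vr n C r"

definition itemval :: "('r \<Rightarrow> nat \<Rightarrow> nat \<Rightarrow> real) \<Rightarrow> 'r \<Rightarrow> (nat \<times> nat) + nat \<Rightarrow> real" where
  "itemval C r x = (case x of Inl e \<Rightarrow> Fval C r e | Inr i \<Rightarrow> Hval C r i)"

definition itemvar :: "(nat \<times> nat \<Rightarrow> real) \<Rightarrow> (nat \<Rightarrow> real) \<Rightarrow> (nat \<times> nat) + nat \<Rightarrow> real" where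
  "itemvar y z x = (case x of Inl e \<Rightarrow> y e | Inr i \<Rightarrow> z i)"

definition Tsize :: "nat \<Rightarrow> ('r \<Rightarrow> nat \<Rightarrow> nat \<Rightarrow> real) \<Rightarrow> 'r \<Rightarrow> nat" where
  "Tsize n C r = card (Er n C r) + card (Vr n C r)"

text \<open>A sorting of the items (ties broken arbitrarily): position t in T^r = {1..|T^r|}
  is assigned item sigma t; values nondecreasing.\<close>
definition valid_order :: "nat \<Rightarrow> ('r \<Rightarrow> nat \<Rightarrow> nat \<Rightarrow> real) \<Rightarrow> 'r \<Rightarrow>
    (nat \<Rightarrow> (nat \<times> nat) + nat) \<Rightarrow> bool" where
  "valid_order n C r \<sigma> \<longleftrightarrow>
     bij_betw \<sigma> {1..Tsize n C r} (items n C r) \<and>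
     (\<forall>s t. 1 \<le> s \<longrightarrow> s \<le> t \<longrightarrow> t \<le> Tsize n C r \<longrightarrow> itemval C r (\<sigma> s) \<le> itemval C r (\<sigma> t))"

definition vbar :: "('r \<Rightarrow> nat \<Rightarrow> nat \<Rightarrow> real) \<Rightarrow> ('r \<Rightarrow> nat \<Rightarrow> (nat \<times> nat) + nat) \<Rightarrow> 'r \<Rightarrow> nat \<Rightarrow> real" where
  "vbar C \<sigma> r t = itemval C r (\<sigma> r t)"

definition uvar :: "('r \<Rightarrow> nat \<Rightarrow> (nat \<times> nat) + nat) \<Rightarrow> (nat \<times> nat \<Rightarrow> real) \<Rightarrow> (nat \<Rightarrow> real) \<Rightarrow> 'r \<Rightarrow> nat \<Rightarrow> real" where
  "uvar \<sigma> y z r h = itemvar y z (\<sigma> r h)"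

definition FZS_LP_feasible :: "nat \<Rightarrow> ('r \<Rightarrow> nat \<Rightarrow> nat \<Rightarrow> real) \<Rightarrow> 'r set \<Rightarrow>
    ('r \<Rightarrow> nat \<Rightarrow> (nat \<times> nat) + nat) \<Rightarrow>
    (nat \<times> nat \<Rightarrow> real) \<Rightarrow> (nat \<Rightarrow> real) \<Rightarrow> ('r \<Rightarrow> real) \<Rightarrow> bool" where
  "FZS_LP_feasible n C R \<sigma> y z \<eta> \<longleftrightarrow>
     (\<forall>e \<in> edges n. 0 \<le> y e \<and> y e \<le> 1 \<and> y e \<le> z (fst e) \<and> y e \<le> z (snd e)) \<and>
     (\<forall>i \<in> nodes n. 0 \<le> z i \<and> z i \<le> 1) \<and>
     (\<forall>r \<in> R. 0 \<le> \<eta> r \<and>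
        (\<forall>t \<in> {1..Tsize n C r}.
           \<eta> r \<ge> vbar C \<sigma> r t
                 + (\<Sum>h \<in> {1..<t}. (vbar C \<sigma> r h - vbar C \<sigma> r t) * uvar \<sigma> y z r h)))"

definition FZS_obj :: "nat \<Rightarrow> (nat \<Rightarrow> real) \<Rightarrow> 'r set \<Rightarrow> (nat \<Rightarrow> real) \<Rightarrow> ('r \<Rightarrow> real) \<Rightarrow> real" where
  "FZS_obj n f R z \<eta> = (\<Sum>i \<in> nodes n. f i * z i) + (\<Sum>r \<in> R. \<eta> r)"

definition FZS_LP_optimal :: "nat \<Rightarrow> ('r \<Rightarrow> nat \<Rightarrow> nat \<Rightarrow> real) \<Rightarrow> (nat \<Rightarrow> real) \<Rightarrow> 'r set \<Rightarrow>
    ('r \<Rightarrow> nat \<Rightarrow> (nat \<times> nat) + nat) \<Rightarrow>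
    (nat \<times> nat \<Rightarrow> real) \<Rightarrow> (nat \<Rightarrow> real) \<Rightarrow> ('r \<Rightarrow> real) \<Rightarrow> bool" where
  "FZS_LP_optimal n C f R \<sigma> y z \<eta> \<longleftrightarrow>
     FZS_LP_feasible n C R \<sigma> y z \<eta> \<and>
     (\<forall>y' z' \<eta>'. FZS_LP_feasible n C R \<sigma> y' z' \<eta>' \<longrightarrow> FZS_obj n f R z \<eta> \<le> FZS_obj n f R z' \<eta>')"

end

theory Submission
  imports Defs
begin

definition gfun :: "(nat \<Rightarrow> real) \<Rightarrow> (nat \<Rightarrow> real) \<Rightarrow> nat \<Rightarrow> real" where
  "gfun v u t = v t + (\<Sum>h \<in> {1..<t}. (v h - v t) * u h)"

lemma gfun_alt: "gfun v u t = v t * (1 - (\<Sum>h \<in> {1..<t}. u h)) + (\<Sum>h \<in> {1..<t}. v h * u h)"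
  unfolding gfun_def by (simp add: algebra_simps sum_subtractf sum_distrib_left)

lemma gfun_step: "gfun v u (Suc k) - gfun v u k = (v (Suc k) - v k) * (1 - (\<Sum>h \<in> {1..k}. u h))"
proof -
  have e: "{1..<Suc k} = {1..k}" by auto
  have "(\<Sum>h \<in> {1..k}. u h) = (\<Sum>h \<in> {1..<k}. u h) + (if k \<ge> 1 then u k else 0)"
    by (cases k) (auto simp: atLeastLessThanSuc_atLeastAtMost[symmetric] add.commute)
  moreover have "(\<Sum>h \<in> {1..k}. v h * u h) = (\<Sum>h \<in> {1..<k}. v h * u h) + (if k \<ge> 1 then v k * u k else 0)"
    by (cases k) (auto simp: atLeastLessThanSuc_atLeastAtMost[symmetric] add.commute)
  ultimately show ?thesis unfolding gfun_alt e
    by (cases "k \<ge> 1") (auto simp: algebra_simps)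
qed

lemma up_mono:
  fixes g :: "nat \<Rightarrow> real"
  assumes "\<And>k. a \<le> k \<Longrightarrow> k < b \<Longrightarrow> g k \<le> g (Suc k)" "a \<le> t" "t \<le> b"
  shows "g a \<le> g t"
  using assms(2,3)
proof (induction t rule: dec_induct)
  case base then show ?case by simp
next
  case (step k) then show ?case using assms(1)[of k] by simp
qed

lemma down_mono:
  fixes g :: "nat \<Rightarrow> real"
  assumes "\<And>k. a \<le> k \<Longrightarrow> k < b \<Longrightarrow> g (Suc k) \<le> g k" "a \<le> t" "t \<le> b"
  shows "g t \<le> g a"
  using assms(2,3)
proof (induction t rule: dec_induct)
  case base then show ?case by simp
next
  case (step k) then show ?case using assms(1)[of k] by simp
qed

lemma key:
  fixes v u :: "nat \<Rightarrow> real"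
  assumes vmono: "\<And>s t. 1 \<le> s \<Longrightarrow> s \<le> t \<Longrightarrow> t \<le> N \<Longrightarrow> v s \<le> v t"
    and unn: "\<And>h. h \<in> {1..N} \<Longrightarrow> u h \<ge> 0"
    and ex: "\<exists>t \<in> {1..N}. (\<Sum>h \<in> {1..t}. u h) \<ge> 1"
    and tb: "tb = (LEAST t. t \<in> {1..N} \<and> (\<Sum>h \<in> {1..t}. u h) \<ge> 1)"
    and t: "t \<in> {1..N}"
  shows "gfun v u t \<le> gfun v u tb"
proof -
  have tbP: "tb \<in> {1..N} \<and> (\<Sum>h \<in> {1..tb}. u h) \<ge> 1"
    unfolding tb using ex by (metis (mono_tags, lifting) LeastI_ex)
  show ?thesis
  proof (cases "t \<le> tb")
    case True
    show ?thesis
    proof (rule up_mono[where b=tb and a=t])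
      fix k assume k: "t \<le> k" "k < tb"
      have "\<not> (k \<in> {1..N} \<and> (\<Sum>h \<in> {1..k}. u h) \<ge> 1)"
        using not_less_Least[of k] k unfolding tb by blast
      then have "(\<Sum>h \<in> {1..k}. u h) < 1" using k t tbP by auto
      moreover have "v k \<le> v (Suc k)" using vmono[of k "Suc k"] k t tbP by auto
      ultimately show "gfun v u k \<le> gfun v u (Suc k)"
        using gfun_step[of v u k] by (smt (verit) mult_nonneg_nonneg)
    qed (use True in auto)
  next
    case False
    show ?thesis
    proof (rule down_mono[where b=t and a=tb])
      fix k assume k: "tb \<le> k" "k < t"
      have "(\<Sum>h \<in> {1..tb}. u h) \<le> (\<Sum>h \<in> {1..k}. u h)"
        by (rule sum_mono2) (use k t unn in auto)
      then have "(\<Sum>h \<in> {1..k}. u h) \<ge> 1" using tbP by linarith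
      moreover have "v k \<le> v (Suc k)" using vmono[of k "Suc k"] k t tbP by auto
      ultimately show "gfun v u (Suc k) \<le> gfun v u k"
        using gfun_step[of v u k] by (smt (verit) mult_nonneg_nonpos)
    qed (use False in auto)
  qed
qed

lemma key_nonneg:
  fixes v u :: "nat \<Rightarrow> real"
  assumes vnn: "\<And>h. h \<in> {1..N} \<Longrightarrow> v h \<ge> 0"
    and unn: "\<And>h. h \<in> {1..N} \<Longrightarrow> u h \<ge> 0"
    and ex: "\<exists>t \<in> {1..N}. (\<Sum>h \<in> {1..t}. u h) \<ge> 1"
    and tb: "tb = (LEAST t. t \<in> {1..N} \<and> (\<Sum>h \<in> {1..t}. u h) \<ge> 1)"
  shows "gfun v u tb \<ge> 0"
proof -
  have tbP: "tb \<in> {1..N} \<and> (\<Sum>h \<in> {1..tb}. u h) \<ge> 1"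
    unfolding tb using ex by (metis (mono_tags, lifting) LeastI_ex)
  have s: "(\<Sum>h \<in> {1..<tb}. u h) \<le> 1"
  proof (cases "tb = 1")
    case True then show ?thesis by simp
  next
    case False
    then have k: "tb - 1 < tb" "tb - 1 \<in> {1..N}" using tbP by auto
    have "\<not> (tb - 1 \<in> {1..N} \<and> (\<Sum>h \<in> {1..tb-1}. u h) \<ge> 1)"
      using not_less_Least[of "tb - 1"] k unfolding tb by blast
    moreover have "{1..<tb} = {1..tb-1}" using k by auto
    ultimately show ?thesis using k by auto
  qed
  have "(\<Sum>h \<in> {1..<tb}. v h * u h) \<ge> 0"
    by (rule sum_nonneg) (use tbP vnn unn in auto)
  moreover have "v tb * (1 - (\<Sum>h \<in> {1..<tb}. u h)) \<ge> 0" using s vnn tbP by auto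
  ultimately show ?thesis unfolding gfun_alt by linarith
qed

theorem proposition2:
  fixes n :: nat and c :: "nat \<Rightarrow> nat \<Rightarrow> real" and f :: "nat \<Rightarrow> real"
    and R :: "'r set" and orig dest :: "'r \<Rightarrow> nat" and w :: "'r \<Rightarrow> real"
    and \<alpha> \<gamma> \<theta> :: real
    and \<sigma> :: "'r \<Rightarrow> nat \<Rightarrow> (nat \<times> nat) + nat"
    and y :: "nat \<times> nat \<Rightarrow> real" and z :: "nat \<Rightarrow> real" and \<eta> :: "'r \<Rightarrow> real"
  defines "C \<equiv> Ccost c \<alpha> \<gamma> \<theta> orig dest w"
  defines "tbar \<equiv> \<lambda>r. LEAST t. t \<in> {1..Tsize n C r} \<and> (\<Sum>h \<in> {1..t}. uvar \<sigma> y z r h) \<ge> 1"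
  assumes c_nonneg: "\<forall>i \<in> nodes n. \<forall>j \<in> nodes n. c i j \<ge> 0"
    and c_diag: "\<forall>i \<in> nodes n. c i i = 0"
    and c_tri: "\<forall>i \<in> nodes n. \<forall>j \<in> nodes n. \<forall>k \<in> nodes n. c i k \<le> c i j + c j k"
    and f_nonneg: "\<forall>i \<in> nodes n. f i \<ge> 0"
    and R_fin: "finite R"
    and od: "\<forall>r \<in> R. orig r \<in> nodes n \<and> dest r \<in> nodes n"
    and w_nonneg: "\<forall>r \<in> R. w r \<ge> 0"
    and alpha: "0 \<le> \<alpha>" "\<alpha> \<le> 1" and gamma: "\<gamma> > \<alpha>" and theta: "\<theta> > \<alpha>"
    and sorted: "\<forall>r \<in> R. valid_order n C r (\<sigma> r)"
    and opt: "FZS_LP_optimal n C f R \<sigma> y z \<eta>"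
    and tbar_ex: "\<forall>r \<in> R. \<exists>t \<in> {1..Tsize n C r}. (\<Sum>h \<in> {1..t}. uvar \<sigma> y z r h) \<ge> 1"
  shows "FZS_obj n f R z \<eta> =
    (\<Sum>i \<in> nodes n. f i * z i)
    + (\<Sum>r \<in> R. vbar C \<sigma> r (tbar r) * (1 - (\<Sum>h \<in> {1..<tbar r}. uvar \<sigma> y z r h))
                + (\<Sum>h \<in> {1..<tbar r}. vbar C \<sigma> r h * uvar \<sigma> y z r h))"
proof -
  have feas: "FZS_LP_feasible n C R \<sigma> y z \<eta>" using opt unfolding FZS_LP_optimal_def by blast
  have Cnn: "C r i j \<ge> 0" if "r \<in> R" "i \<in> nodes n" "j \<in> nodes n" for r i j
  proof -
    have "c (orig r) i \<ge> 0" "c i j \<ge> 0" "c j (dest r) \<ge> 0" using c_nonneg od that by auto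
    moreover have "\<gamma> \<ge> 0" "\<theta> \<ge> 0" using alpha gamma theta by auto
    ultimately show ?thesis unfolding C_def Ccost_def using w_nonneg that alpha
      by (simp add: mult_nonneg_nonneg)
  qed
  have edn: "fst e \<in> nodes n \<and> snd e \<in> nodes n" if "e \<in> edges n" for e
    using that unfolding edges_def nodes_def by auto
  have itm: "x \<in> Inl ` edges n \<union> Inr ` nodes n" if "r \<in> R" "x \<in> items n C r" for r x
    using that unfolding items_def Er_def Vr_def by auto
  have sig: "\<sigma> r h \<in> items n C r" if "r \<in> R" "h \<in> {1..Tsize n C r}" for r h
    using sorted that unfolding valid_order_def by (meson bij_betwE)
  have unn: "uvar \<sigma> y z r h \<ge> 0" if "r \<in> R" "h \<in> {1..Tsize n C r}" for r h
  proof -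
    have "\<sigma> r h \<in> Inl ` edges n \<union> Inr ` nodes n" using itm sig that by blast
    then show ?thesis using feas unfolding uvar_def itemvar_def FZS_LP_feasible_def by auto
  qed
  have vnn: "vbar C \<sigma> r h \<ge> 0" if "r \<in> R" "h \<in> {1..Tsize n C r}" for r h
  proof -
    have "\<sigma> r h \<in> Inl ` edges n \<union> Inr ` nodes n" using itm sig that by blast
    then show ?thesis using Cnn[OF that(1)] edn unfolding vbar_def itemval_def Fval_def Hval_def
      by auto
  qed
  have vmono: "vbar C \<sigma> r s \<le> vbar C \<sigma> r t" if "r \<in> R" "1 \<le> s" "s \<le> t" "t \<le> Tsize n C r" for r s t
    using sorted that unfolding valid_order_def vbar_def by blast
  have geq: "gfun (vbar C \<sigma> r) (uvar \<sigma> y z r) t = vbar C \<sigma> r t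
                 + (\<Sum>h \<in> {1..<t}. (vbar C \<sigma> r h - vbar C \<sigma> r t) * uvar \<sigma> y z r h)" for r t
    unfolding gfun_def by simp
  define G where "G r = gfun (vbar C \<sigma> r) (uvar \<sigma> y z r) (tbar r)" for r
  have Galt: "G r = vbar C \<sigma> r (tbar r) * (1 - (\<Sum>h \<in> {1..<tbar r}. uvar \<sigma> y z r h))
                + (\<Sum>h \<in> {1..<tbar r}. vbar C \<sigma> r h * uvar \<sigma> y z r h)" for r
    unfolding G_def gfun_alt by simp
  have Gmax: "G r \<ge> vbar C \<sigma> r t + (\<Sum>h \<in> {1..<t}. (vbar C \<sigma> r h - vbar C \<sigma> r t) * uvar \<sigma> y z r h)"
    if "r \<in> R" "t \<in> {1..Tsize n C r}" for r t
    unfolding G_def geq[symmetric]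
    by (rule key[where N="Tsize n C r"]) (use vmono unn tbar_ex that in \<open>auto simp: tbar_def\<close>)
  have Gnn: "G r \<ge> 0" if "r \<in> R" for r
    unfolding G_def
    by (rule key_nonneg[where N="Tsize n C r"]) (use vnn unn tbar_ex that in \<open>auto simp: tbar_def\<close>)
  have "FZS_LP_feasible n C R \<sigma> y z G"
    using feas Gmax Gnn unfolding FZS_LP_feasible_def by auto
  then have le: "FZS_obj n f R z \<eta> \<le> FZS_obj n f R z G" using opt unfolding FZS_LP_optimal_def by blast
  have ge: "(\<Sum>r \<in> R. G r) \<le> (\<Sum>r \<in> R. \<eta> r)"
  proof (rule sum_mono)
    fix r assume r: "r \<in> R"
    then obtain t where "t \<in> {1..Tsize n C r}" "t = tbar r"
      using tbar_ex unfolding tbar_def by (metis (mono_tags, lifting) LeastI_ex)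
    then show "G r \<le> \<eta> r" using feas r unfolding FZS_LP_feasible_def G_def geq by blast
  qed
  have "(\<Sum>r \<in> R. \<eta> r) = (\<Sum>r \<in> R. G r)" using le ge unfolding FZS_obj_def by linarith
  then show ?thesis unfolding FZS_obj_def Galt by simp
qed

end
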